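(* Let $f_0,\dots,f_n$ be meromorphic functions. For all $x\in\mathbb{C}$ with $|x|>\mathcal{R}(n,q)$ and every choice $\delta_0,\dots,\delta_{n-1}\in\{1,-1\}$, $$\mathcal{W}(f_0,\dots,f_n)(x)=\det\big(\eta_q^{\delta_i(n-i)}\mathcal{D}_q^if_j\big)_{0\le i,j\le n}(x)$$ (with $\delta_n(n-n)=0$, so the last row is $\mathcal{D}_q^nf_j$), and $$\mathcal{W}(f_0,\dots,f_n)(x)=\det\big(\eta_q^{n-2i}f_j\big)_{0\le i,j\le n}(x)\cdot\prod_{i=1}^{n}\prod_{j=1}^{i}\frac{-1}{\eta_q^{i-2j+2}x-\eta_q^{i-2j}x}.$$
   Context: Fix $q\in\mathbb{C}$ with $0<|q|<1$. Every $x\in\mathbb{C}$ is written uniquely as $x=\frac{z+z^{-1}}{2}$ with $|z|\ge 1$ (when $|z|=1$, $z=x+i\sqrt{1-x^2}$). $(\eta_q f)(x)=f\big(\tfrac{q^{1/2}z+q^{-1/2}z^{-1}}{2}\big)$, $(\eta_q^{-1}f)(x)=f\big(\tfrac{q^{-1/2}z+q^{1/2}z^{-1}}{2}\big)$, $\eta_q^0f=f$, $\eta_q^{k}=\eta_q\circ\eta_q^{k-1}$, $\eta_q^{-k}=\eta_q^{-1}\circ\eta_q^{-(k-1)}$; $(\eta_{q^{\pm k}}f)(x)=f\big(\tfrac{q^{\pm k/2}z+q^{\mp k/2}z^{-1}}{2}\big)$; $\eta_q^kx$ denotes $\eta_q^k$ applied to the identity map. $\mathcal{R}(n,q)>0$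 is a constant such that for $|x|>\mathcal{R}(n,q)$ (e.g. whenever $|z|>|q|^{-n/2}$) one has $\eta_q^{\pm k}f=\eta_{q^{\pm k}}f$ for $0\le k\le n$ and $\eta_q^{-m_1}\eta_q^{m_2}=\eta_q^{m_2}\eta_q^{-m_1}=\eta_q^{m_2-m_1}$ for $0\le m_1,m_2\le n$. Askey-Wilson operator $(\mathcal{D}_qf)(x)=\frac{(\eta_qf)(x)-(\eta_q^{-1}f)(x)}{\eta_qx-\eta_q^{-1}x}$ ($x\ne\pm1$; limit at $\pm1$), $\mathcal{D}_q^0f=f$, $\mathcal{D}_q^k=\mathcal{D}_q\circ\mathcal{D}_q^{k-1}$; $(\mathcal{A}_{q^k}f)(x)=\frac{(\eta_{q^k}f)(x)+(\eta_{q^{-k}}f)(x)}{2}$, $\mathcal{A}_{q^0}f=f$. The Askey-Wilson Wronskian-Casorati determinant is $\mathcal{W}(f_0,\dots,f_n)(x)=\det\big(\mathcal{A}_{q^{n-i}}\mathcal{D}_q^{i}f_j\big)_{0\le i,j\le n}(x)$ (row index $i$, column index $j$). *)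

theory Defs
  imports "HOL-Complex_Analysis.Complex_Analysis" "Jordan_Normal_Form.Determinant"
begin

text \<open>Joukowski parametrisation: x = (z + 1/z)/2 with |z| \<ge> 1; on the cut [-1,1]
  (the only place where |z| = 1) the convention z = x + i sqrt(1 - x^2).\<close>
definition zOf :: "complex \<Rightarrow> complex" where
  "zOf x = (if x \<in> \<real> \<and> \<bar>Re x\<bar> \<le> 1 then x + \<i> * complex_of_real (sqrt (1 - (Re x)\<^sup>2))
            else (THE z. norm z \<ge> 1 \<and> x = (z + inverse z) / 2))"

definition qh :: "complex \<Rightarrow> complex" where "qh q = csqrt q"

definition eta :: "complex \<Rightarrow> (complex \<Rightarrow> complex) \<Rightarrow> complex \<Rightarrow> complex" where
  "eta q f x = f ((qh q * zOf x + inverse (qh q) * inverse (zOf x)) / 2)"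

definition etainv :: "complex \<Rightarrow> (complex \<Rightarrow> complex) \<Rightarrow> complex \<Rightarrow> complex" where
  "etainv q f x = f ((inverse (qh q) * zOf x + qh q * inverse (zOf x)) / 2)"

definition etaIt :: "complex \<Rightarrow> int \<Rightarrow> (complex \<Rightarrow> complex) \<Rightarrow> complex \<Rightarrow> complex" where
  "etaIt q k = (if k \<ge> 0 then eta q ^^ nat k else etainv q ^^ nat (- k))"

definition etaQ :: "complex \<Rightarrow> int \<Rightarrow> (complex \<Rightarrow> complex) \<Rightarrow> complex \<Rightarrow> complex" where
  "etaQ q k f x = f ((qh q powi k * zOf x + qh q powi (- k) * inverse (zOf x)) / 2)"

definition avg :: "complex \<Rightarrow> nat \<Rightarrow> (complex \<Rightarrow> complex) \<Rightarrow> complex \<Rightarrow> complex" where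
  "avg q k f x = (if k = 0 then f x else (etaQ q (int k) f x + etaQ q (- int k) f x) / 2)"

definition AWD :: "complex \<Rightarrow> (complex \<Rightarrow> complex) \<Rightarrow> complex \<Rightarrow> complex" where
  "AWD q f x = (if x = 1 \<or> x = -1
     then Lim (at x) (\<lambda>y. (eta q f y - etainv q f y) / (eta q (\<lambda>t. t) y - etainv q (\<lambda>t. t) y))
     else (eta q f x - etainv q f x) / (eta q (\<lambda>t. t) x - etainv q (\<lambda>t. t) x))"

definition AWDpow :: "complex \<Rightarrow> nat \<Rightarrow> (complex \<Rightarrow> complex) \<Rightarrow> complex \<Rightarrow> complex" where
  "AWDpow q k = AWD q ^^ k"

definition AWW :: "complex \<Rightarrow> nat \<Rightarrow> (nat \<Rightarrow> complex \<Rightarrow> complex) \<Rightarrow> complex \<Rightarrow> complex" where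
  "AWW q n f x = det (mat (n+1) (n+1) (\<lambda>(i,j). avg q (n - i) (AWDpow q i (f j)) x))"

text \<open>The constant R(n,q): |x| > R(n,q) forces |z| > |q|^(-n/2) (since |x| \<le> |z|).\<close>
definition RR :: "nat \<Rightarrow> complex \<Rightarrow> real" where
  "RR n q = norm q powr (- real n / 2)"

end

theory Submission
  imports Defs
begin


definition MR :: "nat \<Rightarrow> (nat \<Rightarrow> nat \<Rightarrow> complex) \<Rightarrow> complex mat" where
  "MR N R = mat N N (\<lambda>(i,j). R i j)"

lemma MR_cong: "(\<And>i. i < N \<Longrightarrow> R i = R' i) \<Longrightarrow> MR N R = MR N R'"
  unfolding MR_def by (rule eq_matI) auto

lemma det_MR_lin:
  assumes k: "k < N" and Rk: "R k = (\<lambda>j. a * x j + b * y j)"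
  shows "det (MR N R) = a * det (MR N (R(k:=x))) + b * det (MR N (R(k:=y)))"
proof -
  have f: "finite {0..<N}" and k': "k \<in> {0..<N}" using k by auto
  have *: "(\<Prod>i = 0..<N. MR N R $$ (i, p i)) =
     a * (\<Prod>i = 0..<N. MR N (R(k:=x)) $$ (i, p i)) + b * (\<Prod>i = 0..<N. MR N (R(k:=y)) $$ (i, p i))"
    if p: "p permutes {0..<N}" for p
  proof -
    have pk: "p k < N" using p k by (meson atLeastLessThan_iff permutes_in_image k')
    have pin: "\<And>i. i < N \<Longrightarrow> p i < N" using p
      by (metis atLeastLessThan_iff permutes_in_image zero_le)
    have e: "\<And>S. (\<Prod>i\<in>{0..<N} - {k}. MR N S $$ (i, p i)) = (\<Prod>i\<in>{0..<N} - {k}. S i (p i))"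
      by (rule prod.cong) (auto simp: MR_def pin)
    have e2: "\<And>S. (\<Prod>i\<in>{0..<N} - {k}. (R(k:=S)) i (p i)) = (\<Prod>i\<in>{0..<N} - {k}. R i (p i))"
      by (rule prod.cong) auto
    show ?thesis
      unfolding prod.remove[OF f k'] e e2 using k pk Rk by (simp add: MR_def algebra_simps)
  qed
  have d: "\<And>S. det (MR N S) = (\<Sum>p\<in>{p. p permutes {0..<N}}. signof p * (\<Prod>i=0..<N. MR N S $$ (i,p i)))"
    by (simp add: det_def MR_def)
  show ?thesis unfolding d
    by (simp add: * sum_distrib_left sum.distrib algebra_simps)
qed

lemma det_MR_dup:
  assumes "i < N" "l < N" "i \<noteq> l" "R i = R l"
  shows "det (MR N R) = 0"
  by (rule det_identical_rows[of _ N i l]) (use assms in \<open>auto simp: MR_def\<close>)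

locale awalg =
  fixes n :: nat and v :: "nat \<Rightarrow> int \<Rightarrow> nat \<Rightarrow> complex" and c :: "int \<Rightarrow> complex"
  assumes recv: "\<And>i t. i < n \<Longrightarrow> \<bar>t\<bar> < int n \<Longrightarrow>
      v i (t-1) = (\<lambda>j. 1 * v i (t+1) j + (- c t) * v (Suc i) t j)"
begin

definition fin :: "nat \<Rightarrow> nat \<Rightarrow> complex" where "fin i = v i (int n - int i)"

definition adm :: "nat \<Rightarrow> int \<Rightarrow> bool" where
  "adm i s \<longleftrightarrow> (\<exists>m. m \<le> n - i \<and> s = int (n - i) - 2 * int m)"

lemma claim_aux:
  assumes "Suc n - k = d" "k \<le> Suc n"
    and "\<forall>i. k \<le> i \<and> i \<le> n \<longrightarrow> adm i (s i) \<and> R i = v i (s i)"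
  shows "det (MR (Suc n) R) = det (MR (Suc n) (\<lambda>i. if i < k then R i else fin i))"
  using assms
proof (induction d arbitrary: k R s)
  case 0
  then show ?case by (intro arg_cong[where f=det] MR_cong) auto
next
  case (Suc d)
  then have kn: "k \<le> n" and d: "Suc n - Suc k = d" by auto
  note oIH = Suc.IH
  define R1 where "R1 = (\<lambda>i. if i < Suc k then R i else fin i)"
  have A: "det (MR (Suc n) R) = det (MR (Suc n) R1)"
    unfolding R1_def by (rule Suc.IH[OF d]) (use Suc.prems kn in auto)
  obtain m0 where m0: "m0 \<le> n - k" "s k = int (n - k) - 2 * int m0"
    using Suc.prems(3) kn unfolding adm_def by auto
  have B: "det (MR (Suc n) (R1(k := v k (int (n - k) - 2 * int m)))) = det (MR (Suc n) (R1(k := fin k)))"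
    if "m \<le> n - k" for m
    using that
  proof (induction m)
    case 0
    then show ?case using kn by (simp add: fin_def of_nat_diff)
  next
    case (Suc m)
    define t where "t = int (n - k) - 2 * int m - 1"
    have kn': "k < n" using Suc.prems by auto
    have tb: "\<bar>t\<bar> < int n" using Suc.prems kn' unfolding t_def by auto
    have e1: "int (n - k) - 2 * int (Suc m) = t - 1" unfolding t_def by simp
    have e2: "int (n - k) - 2 * int m = t + 1" unfolding t_def by simp
    have L: "det (MR (Suc n) (R1(k := v k (t - 1)))) =
       1 * det (MR (Suc n) (R1(k := v k (t+1)))) + (- c t) * det (MR (Suc n) (R1(k := v (Suc k) t)))"
      using det_MR_lin[of k "Suc n" "R1(k := v k (t - 1))" 1 "v k (t+1)" "- c t" "v (Suc k) t"]
        recv[OF kn' tb] kn by simp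
    define R2 where "R2 = R1(k := v (Suc k) t, Suc k := v (Suc k) t)"
    have z: "det (MR (Suc n) R2) = 0"
      by (rule det_MR_dup[of k _ "Suc k"]) (use kn' in \<open>auto simp: R2_def\<close>)
    have "det (MR (Suc n) R2) = det (MR (Suc n) (\<lambda>i. if i < Suc k then R2 i else fin i))"
    proof (rule oIH[OF d, where s="\<lambda>i. if i = Suc k then t else int n - int i"])
      show "Suc k \<le> Suc n" using kn by simp
      show "\<forall>i. Suc k \<le> i \<and> i \<le> n \<longrightarrow> adm i ((\<lambda>i. if i = Suc k then t else int n - int i) i) \<and>
          R2 i = v i ((\<lambda>i. if i = Suc k then t else int n - int i) i)"
      proof (intro allI impI)
        fix i assume i: "Suc k \<le> i \<and> i \<le> n"
        show "adm i ((\<lambda>i. if i = Suc k then t else int n - int i) i) \<and>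
          R2 i = v i ((\<lambda>i. if i = Suc k then t else int n - int i) i)"
        proof (cases "i = Suc k")
          case True
          then show ?thesis unfolding adm_def R2_def t_def using Suc.prems
            by (auto intro!: exI[of _ m])
        next
          case False
          then show ?thesis unfolding adm_def R2_def R1_def fin_def using i
            by (auto intro!: exI[of _ 0])
        qed
      qed
    qed
    also have "(\<lambda>i. if i < Suc k then R2 i else fin i) = R1(k := v (Suc k) t)"
      unfolding R2_def R1_def by auto
    finally have z2: "det (MR (Suc n) (R1(k := v (Suc k) t))) = 0" using z by metis
    have ih: "det (MR (Suc n) (R1(k := v k (t+1)))) = det (MR (Suc n) (R1(k := fin k)))"
      by (rule Suc.IH[unfolded e2]) (use Suc.prems in simp)
    show ?case unfolding e1 L ih z2 by (simp add: fun_upd_def)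
  qed
  have "R1 = R1(k := v k (int (n - k) - 2 * int m0))" using m0 Suc.prems(3) kn
    unfolding R1_def by auto
  then have "det (MR (Suc n) R1) = det (MR (Suc n) (R1(k := fin k)))" using B[OF m0(1)] by simp
  also have "R1(k := fin k) = (\<lambda>i. if i < k then R i else fin i)"
    unfolding R1_def by auto
  finally show ?case using A by simp
qed


definition avgr :: "nat \<Rightarrow> nat \<Rightarrow> complex" where
  "avgr i = (\<lambda>j. (1/2) * v i (int n - int i) j + (1/2) * v i (- (int n - int i)) j)"

lemma avg_aux:
  assumes "Suc n - k = d" "k \<le> Suc n"
  shows "det (MR (Suc n) (\<lambda>i. if i < k then R i else avgr i)) =
         det (MR (Suc n) (\<lambda>i. if i < k then R i else fin i))"
  using assms
proof (induction d arbitrary: k R)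
  case 0
  then show ?case by (intro arg_cong[where f=det] MR_cong) auto
next
  case (Suc d)
  then have kn: "k \<le> n" and d: "Suc n - Suc k = d" by auto
  let ?A = "\<lambda>i. if i < k then R i else avgr i"
  have L: "det (MR (Suc n) ?A) = (1/2) * det (MR (Suc n) (?A(k := fin k)))
      + (1/2) * det (MR (Suc n) (?A(k := v k (- (int n - int k)))))"
    by (rule det_MR_lin) (use kn in \<open>auto simp: avgr_def fin_def\<close>)
  have e: "\<And>x. ?A(k := x) = (\<lambda>i. if i < Suc k then (R(k:=x)) i else avgr i)"
    by auto
  have ih: "\<And>R. det (MR (Suc n) (\<lambda>i. if i < Suc k then R i else avgr i)) =
         det (MR (Suc n) (\<lambda>i. if i < Suc k then R i else fin i))"
    using Suc.IH[OF d] kn by simp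
  have h1: "det (MR (Suc n) (?A(k := fin k))) = det (MR (Suc n) (\<lambda>i. if i < k then R i else fin i))"
    unfolding e ih
    by (intro arg_cong[where f=det] MR_cong) (auto simp: less_Suc_eq)
  have "det (MR (Suc n) (?A(k := v k (- (int n - int k))))) =
     det (MR (Suc n) (\<lambda>i. if i < Suc k then (R(k:=v k (- (int n - int k)))) i else fin i))"
    unfolding e ih by simp
  also have "\<dots> = det (MR (Suc n) (\<lambda>i. if i < k then (\<lambda>i. if i < Suc k then (R(k:=v k (- (int n - int k)))) i else fin i) i else fin i))"
  proof (rule claim_aux[OF refl, where s="\<lambda>i. if i = k then - (int n - int k) else int n - int i"])
    show "k \<le> Suc n" using kn by simp
    show "\<forall>i. k \<le> i \<and> i \<le> n \<longrightarrow> adm i ((\<lambda>i. if i = k then - (int n - int k) else int n - int i) i) \<and>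
      (\<lambda>i. if i < Suc k then (R(k:=v k (- (int n - int k)))) i else fin i) i =
      v i ((\<lambda>i. if i = k then - (int n - int k) else int n - int i) i)"
      unfolding adm_def fin_def
      by (auto intro: exI[of _ 0] exI[of _ "n-k"] simp: of_nat_diff less_Suc_eq)
  qed
  also have "\<dots> = det (MR (Suc n) (\<lambda>i. if i < k then R i else fin i))"
    by (intro arg_cong[where f=det] MR_cong) auto
  finally show ?case using L h1 by simp
qed

definition Rw :: "nat \<Rightarrow> nat \<Rightarrow> nat \<Rightarrow> nat \<Rightarrow> complex" where
  "Rw k l i = (if i < k then fin i else if i \<le> l then v k (int n - int k - 2 * (int i - int k))
      else v (Suc k) (int n - int (Suc k) - 2 * (int i - int (Suc k))))"

lemma Rw_step:
  assumes "k < l" "l \<le> n"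
  shows "det (MR (Suc n) (Rw k l)) = - c (int n - int k - 2 * (int l - int k) + 1) * det (MR (Suc n) (Rw k (l - 1)))"
proof -
  define tt where "tt = int n - int k - 2 * (int l - int k) + 1"
  have kn: "k < n" using assms by simp
  have tb: "\<bar>tt\<bar> < int n" using assms unfolding tt_def by auto
  have r: "Rw k l l = v k (tt - 1)" using assms unfolding Rw_def tt_def by simp
  have L: "det (MR (Suc n) (Rw k l)) = 1 * det (MR (Suc n) ((Rw k l)(l := v k (tt+1))))
     + (- c tt) * det (MR (Suc n) ((Rw k l)(l := v (Suc k) tt)))"
    by (rule det_MR_lin) (use assms recv[OF kn tb] r in auto)
  have z: "det (MR (Suc n) ((Rw k l)(l := v k (tt+1)))) = 0"
    by (rule det_MR_dup[of l _ "l - 1"]) (use assms in \<open>auto simp: Rw_def tt_def of_nat_diff algebra_simps\<close>)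
  have e: "(Rw k l)(l := v (Suc k) tt) = Rw k (l - 1)"
    using assms unfolding Rw_def tt_def by (auto simp: fun_eq_iff algebra_simps)
  show ?thesis unfolding L z e unfolding tt_def by simp
qed

lemma Rw_inner:
  assumes "j \<le> n - k"
  shows "det (MR (Suc n) (Rw k (k + j))) =
    (\<Prod>i=1..j. - c (int (n - k) - 2 * int i + 1)) * det (MR (Suc n) (Rw k k))"
  using assms
proof (induction j)
  case 0
  then show ?case by simp
next
  case (Suc j)
  have "det (MR (Suc n) (Rw k (k + Suc j))) = - c (int (n - k) - 2 * int (Suc j) + 1) * det (MR (Suc n) (Rw k (k + j)))"
    using Rw_step[of k "k + Suc j"] Suc.prems by (simp add: of_nat_diff)
  then show ?case using Suc by (simp add: mult_ac)
qed

definition GG :: "nat \<Rightarrow> complex" where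
  "GG k = (\<Prod>m=1..n-k. \<Prod>j=1..m. - c (int m - 2 * int j + 1))"

lemma Rw_outer:
  assumes "k \<le> n"
  shows "det (MR (Suc n) (Rw k n)) = GG k * det (MR (Suc n) fin)"
  using assms
proof (induction "n - k" arbitrary: k)
  case 0
  then have "k = n" by simp
  then show ?case unfolding GG_def
    by (simp, intro arg_cong[where f=det] MR_cong) (auto simp: Rw_def fin_def less_Suc_eq)
next
  case (Suc x)
  then have kn: "k < n" and x: "x = n - Suc k" by auto
  have "det (MR (Suc n) (Rw k n)) = (\<Prod>i=1..n-k. - c (int (n - k) - 2 * int i + 1)) * det (MR (Suc n) (Rw k k))"
    using Rw_inner[of "n - k" k] kn by simp
  also have "MR (Suc n) (Rw k k) = MR (Suc n) (Rw (Suc k) n)"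
    by (rule MR_cong) (auto simp: Rw_def fin_def less_Suc_eq)
  also have "det \<dots> = GG (Suc k) * det (MR (Suc n) fin)"
    using Suc.hyps(1)[OF x] kn by simp
  also have "(\<Prod>i=1..n-k. - c (int (n - k) - 2 * int i + 1)) * (GG (Suc k) * det (MR (Suc n) fin))
      = GG k * det (MR (Suc n) fin)"
  proof -
    have "n - k = Suc (n - Suc k)" using kn by simp
    then show ?thesis unfolding GG_def by (simp add: mult_ac)
  qed
  finally show ?case .
qed

lemma main1: "det (MR (Suc n) avgr) = det (MR (Suc n) fin)"
  using avg_aux[OF refl, of 0] by simp

lemma main2:
  assumes "\<forall>i\<le>n. adm i (s i)"
  shows "det (MR (Suc n) (\<lambda>i. v i (s i))) = det (MR (Suc n) fin)"
  using claim_aux[OF refl, of 0 s "\<lambda>i. v i (s i)"] assms by simp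

lemma main3: "det (MR (Suc n) (\<lambda>i. v 0 (int n - 2 * int i))) = GG 0 * det (MR (Suc n) fin)"
proof -
  have "MR (Suc n) (\<lambda>i. v 0 (int n - 2 * int i)) = MR (Suc n) (Rw 0 n)"
    by (rule MR_cong) (auto simp: Rw_def)
  then show ?thesis using Rw_outer[of 0] by simp
qed

end



lemma not_cut:
  assumes w: "norm w > 1" and y: "y = (w + inverse w) / 2"
  shows "\<not> (y \<in> \<real> \<and> \<bar>Re y\<bar> \<le> 1)"
proof
  assume c: "y \<in> \<real> \<and> \<bar>Re y\<bar> \<le> 1"
  define r where "r = Re y"
  have yr: "y = complex_of_real r" using c unfolding r_def by (simp add: complex_is_Real_iff complex_eq_iff)
  have w0: "w \<noteq> 0" using w by auto
  define u where "u = w - y"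
  have "u^2 = y^2 - 1" unfolding u_def y using w0
    by (simp add: field_simps power2_eq_square)
  then have e: "u^2 = complex_of_real (r^2 - 1)" using yr by simp
  have re: "Re u ^2 - Im u ^2 = r^2 - 1"
    using arg_cong[OF e, of Re] by (simp add: power2_eq_square)
  have im: "Re u = 0 \<or> Im u = 0"
    using arg_cong[OF e, of Im] by (simp add: power2_eq_square) blast
  have r1: "r^2 \<le> 1" using c abs_square_le_1 unfolding r_def by blast
  have "Re u = 0"
  proof (rule ccontr)
    assume "Re u \<noteq> 0"
    then have "Im u = 0" using im by blast
    then have "Re u ^2 \<le> 0" using re r1 by simp
    moreover have "0 < Re u * Re u" using \<open>Re u \<noteq> 0\<close> by (cases "Re u > 0") (auto simp: mult_pos_pos mult_neg_neg)
    ultimately show False by (simp only: power2_eq_square)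
  qed
  then have rw: "Re w = r" "Im w = Im u" unfolding u_def yr by simp_all
  have "norm w ^2 = 1" using re \<open>Re u = 0\<close> rw by (simp add: cmod_power2)
  then show False using less_1_mult[OF w w] by (simp add: power2_eq_square)
qed

lemma zOf_eq:
  assumes w: "norm w > 1"
  shows "zOf ((w + inverse w) / 2) = w"
proof -
  have w0: "w \<noteq> 0" using w by auto
  have "(THE z. norm z \<ge> 1 \<and> (w + inverse w) / 2 = (z + inverse z) / 2) = w"
  proof (rule the_equality)
    show "norm w \<ge> 1 \<and> (w + inverse w) / 2 = (w + inverse w) / 2" using w by simp
    fix z assume z: "norm z \<ge> 1 \<and> (w + inverse w) / 2 = (z + inverse z) / 2"
    then have z0: "z \<noteq> 0" by auto
    have e1: "w + inverse w = z + inverse z" using z by (metis divide_cancel_right zero_neq_numeral)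
    then have "(w + inverse w)*(w*z) = (z + inverse z)*(w*z)" by simp
    moreover have "(w + inverse w)*(w*z) = w*w*z + z" using w0 by (simp add: ring_distribs mult.assoc[symmetric])
    moreover have "(z + inverse z)*(w*z) = z*z*w + w" using z0 by (simp add: ring_distribs mult.assoc[symmetric] mult.commute[of _ w])
    ultimately have "w*w*z + z = z*z*w + w" by simp
    moreover have "(z-w)*(z*w-1) = (z*z*w + w) - (w*w*z + z)" by (simp add: algebra_simps)
    ultimately have "(z - w) * (z * w - 1) = 0" by simp
    moreover have "z * w \<noteq> 1"
    proof
      assume "z * w = 1"
      then have "norm z * norm w = 1" by (metis norm_mult norm_one)
      moreover have "norm z * norm w > 1" using z w
        by (metis less_1_mult less_le_trans mult.commute mult_le_cancel_right1 norm_ge_zero order.strict_implies_order not_less)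
      ultimately show False by simp
    qed
    ultimately show "z = w" by simp
  qed
  then show ?thesis unfolding zOf_def if_not_P[OF not_cut[OF w refl]] .
qed



lemma joukowski_exists:
  fixes x :: complex
  assumes x: "norm x > 1"
  shows "\<exists>w. norm w > 1 \<and> x = (w + inverse w) / 2"
proof -
  define s where "s = csqrt (x^2 - 1)"
  define w0 where "w0 = x + s"
  define w1 where "w1 = x - s"
  have prod: "w0 * w1 = 1" unfolding w0_def w1_def
    using power2_csqrt[of "x^2 - 1"] unfolding s_def by (simp add: algebra_simps power2_eq_square)
  then have w0n: "w0 \<noteq> 0" by auto
  have w1i: "w1 = inverse w0" using prod w0n by (simp add: field_simps)
  have "w0 + w1 = 2 * x" unfolding w0_def w1_def by simp
  then have sum: "x = (w0 + inverse w0) / 2" using w1i by simp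
  have "\<exists>w. norm w \<ge> 1 \<and> x = (w + inverse w) / 2"
  proof (cases "norm w0 \<ge> 1")
    case True then show ?thesis using sum by blast
  next
    case False
    then have "norm (inverse w0) \<ge> 1" using w0n
      by (simp add: norm_inverse one_le_inverse_iff)
    then show ?thesis using sum by (intro exI[of _ "inverse w0"]) (simp add: add.commute w0n)
  qed
  then obtain w where w: "norm w \<ge> 1" "x = (w + inverse w) / 2" by blast
  have "norm w \<noteq> 1"
  proof
    assume w1: "norm w = 1"
    have "norm x \<le> (norm w + norm (inverse w)) / 2" unfolding w(2)
      by (simp add: norm_triangle_ineq divide_right_mono)
    also have "\<dots> = 1" using w1 by (simp add: norm_inverse)
    finally show False using x by simp
  qed
  then show ?thesis using w by (intro exI[of _ w]) auto
qed

definition PP :: "complex \<Rightarrow> complex \<Rightarrow> int \<Rightarrow> complex" where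
  "PP p z t = (p powi t * z + p powi (- t) * inverse z) / 2"

locale awconc =
  fixes q :: complex and n :: nat and x :: complex
  assumes q0: "0 < norm q" and q1: "norm q < 1" and xR: "norm x > RR n q"
begin

definition p where "p = qh q"
definition z where "z = zOf x"

lemma p0: "p \<noteq> 0" using q0 unfolding p_def qh_def by auto
lemma np: "norm p = sqrt (norm q)" unfolding p_def qh_def by simp
lemma np1: "norm p < 1" using q1 np by simp
lemma npos: "norm p > 0" using p0 by simp
lemma pq: "p * p = q" unfolding p_def qh_def by (metis power2_csqrt power2_eq_square)
lemma pp1: "p * p \<noteq> 1" using pq q1 by auto

lemma RR_eq: "RR n q = inverse (norm p ^ n)"
proof -
  define a where "a = norm q"
  have a0: "0 < a" using q0 unfolding a_def .
  have "norm p ^ n = (a powr (1/2)) ^ n" unfolding np a_def[symmetric] using a0 by (simp add: powr_half_sqrt)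
  also have "\<dots> = (a powr (1/2)) powr (real n)" using a0 by (simp add: powr_realpow)
  also have "\<dots> = a powr (real n / 2)" by (simp add: powr_powr)
  finally have e: "norm p ^ n = a powr (real n / 2)" .
  have "RR n q = a powr (- (real n / 2))" unfolding RR_def a_def by simp
  also have "\<dots> = inverse (a powr (real n / 2))" by (rule powr_minus)
  finally show ?thesis unfolding e .
qed

lemma x1: "norm x > 1"
proof -
  have "norm p ^ n \<le> 1" using np1 npos by (simp add: power_le_one)
  then have "inverse (norm p ^ n) \<ge> 1" using npos by (simp add: one_le_inverse_iff)
  then show ?thesis using xR RR_eq by simp
qed

lemma z_props: "norm z > 1" "x = (z + inverse z) / 2"
proof -
  obtain w where w: "norm w > 1" "x = (w + inverse w) / 2" using joukowski_exists[OF x1] by blast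
  have "zOf x = w" by (subst w(2)) (rule zOf_eq[OF w(1)])
  then have zw: "z = w" unfolding z_def .
  show "norm z > 1" unfolding zw by (rule w(1))
  show "x = (z + inverse z) / 2" unfolding zw by (rule w(2))
qed

lemma z0: "z \<noteq> 0" using z_props by auto

lemma nz_ge: "norm z \<ge> norm x"
proof -
  have "norm x \<le> (norm z + norm (inverse z)) / 2" unfolding z_props(2)[symmetric]
    by (subst z_props(2)) (simp add: norm_triangle_ineq divide_right_mono)
  also have "norm (inverse z) \<le> norm z" using z_props(1)
    by (simp add: norm_inverse) (meson inverse_le_1_iff less_le_trans not_le zero_less_one order.strict_implies_order)
  then have "(norm z + norm (inverse z)) / 2 \<le> norm z" by simp
  finally show ?thesis .
qed

lemma zbig: "norm z * norm p ^ n > 1"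
proof -
  have "norm z > inverse (norm p ^ n)" using nz_ge xR RR_eq by simp
  then show ?thesis using npos by (simp add: field_simps)
qed

lemma Zbig: "t \<le> int n \<Longrightarrow> norm (p powi t * z) > 1"
proof -
  assume t: "t \<le> int n"
  have "norm p powi int n \<le> norm p powi t"
    by (rule power_int_decreasing) (use t np1 npos in auto)
  then have "norm z * norm p ^ n \<le> norm z * norm p powi t" by (simp add: mult_left_mono)
  then show ?thesis using zbig by (simp add: norm_mult norm_power_int mult.commute)
qed

lemma PP_form: "PP p z t = (p powi t * z + inverse (p powi t * z)) / 2"
  unfolding PP_def by (simp add: power_int_minus mult.commute)

lemma zOf_PP: "t \<le> int n \<Longrightarrow> zOf (PP p z t) = p powi t * z"
  unfolding PP_form by (rule zOf_eq[OF Zbig])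

lemma PP0: "PP p z 0 = x" unfolding PP_def using z_props by simp

lemma zOfx: "zOf x = z" unfolding z_def ..

lemma PP_succ: "(p * (p powi t * z) + inverse p * inverse (p powi t * z)) / 2 = PP p z (t + 1)"
proof -
  have "p powi (t + 1) = p * p powi t" using p0 by (simp add: power_int_add_1')
  then show ?thesis unfolding PP_def power_int_minus using p0 z0
    by (simp add: algebra_simps)
qed

lemma PP_pred: "(inverse p * (p powi t * z) + p * inverse (p powi t * z)) / 2 = PP p z (t - 1)"
proof -
  have "p powi t = p * p powi (t - 1)" using p0 power_int_add_1'[of p "t - 1"] by simp
  then have "p powi (t - 1) = inverse p * p powi t" using p0 by simp
  then show ?thesis unfolding PP_def power_int_minus using p0 z0
    by (simp add: algebra_simps)
qed

lemma eta_PP: "t \<le> int n \<Longrightarrow> eta q g (PP p z t) = g (PP p z (t + 1))"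
  unfolding eta_def p_def[symmetric] using zOf_PP PP_succ by simp

lemma etainv_PP: "t \<le> int n \<Longrightarrow> etainv q g (PP p z t) = g (PP p z (t - 1))"
  unfolding etainv_def p_def[symmetric] using zOf_PP PP_pred by simp


lemma eta_pow: "t + int m \<le> int n \<Longrightarrow> (eta q ^^ m) g (PP p z t) = g (PP p z (t + int m))"
proof (induction m arbitrary: t)
  case 0 then show ?case by simp
next
  case (Suc m)
  have "(eta q ^^ Suc m) g (PP p z t) = eta q ((eta q ^^ m) g) (PP p z t)" by simp
  also have "\<dots> = (eta q ^^ m) g (PP p z (t + 1))" using Suc.prems by (intro eta_PP) simp
  also have "\<dots> = g (PP p z (t + 1 + int m))" using Suc.prems by (intro Suc.IH) simp
  finally show ?case by (simp add: add.assoc)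
qed

lemma etainv_pow: "t \<le> int n \<Longrightarrow> (etainv q ^^ m) g (PP p z t) = g (PP p z (t - int m))"
proof (induction m arbitrary: t)
  case 0 then show ?case by simp
next
  case (Suc m)
  have "(etainv q ^^ Suc m) g (PP p z t) = etainv q ((etainv q ^^ m) g) (PP p z t)" by simp
  also have "\<dots> = (etainv q ^^ m) g (PP p z (t - 1))" using Suc.prems by (intro etainv_PP) simp
  also have "\<dots> = g (PP p z (t - 1 - int m))" using Suc.prems by (intro Suc.IH) simp
  finally show ?case by (simp add: algebra_simps)
qed

lemma etaIt_PP: "k \<le> int n \<Longrightarrow> etaIt q k g x = g (PP p z k)"
proof (cases "k \<ge> 0")
  case True
  assume "k \<le> int n"
  then show ?thesis using True eta_pow[of 0 "nat k" g] unfolding etaIt_def PP0 by simp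
next
  case False
  then show ?thesis using etainv_pow[of 0 "nat (- k)" g] unfolding etaIt_def PP0 by simp
qed

lemma etaQ_PP: "etaQ q k g x = g (PP p z k)"
  unfolding etaQ_def zOfx p_def[symmetric] PP_def ..

lemma avg_PP: "avg q k g x = (g (PP p z (int k)) + g (PP p z (- int k))) / 2"
  unfolding avg_def etaQ_PP using PP0 by simp

lemma PP_not1: "t \<le> int n \<Longrightarrow> PP p z t \<noteq> 1 \<and> PP p z t \<noteq> -1"
  using not_cut[OF Zbig refl, of t] unfolding PP_form[symmetric] by auto

lemma cdiff: "t \<le> int n \<Longrightarrow> PP p z (t+1) - PP p z (t-1) \<noteq> 0"
proof -
  assume t: "t \<le> int n"
  define w where "w = p powi t * z"
  have w1: "norm w > 1" unfolding w_def using Zbig[OF t] .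
  then have w0: "w \<noteq> 0" by auto
  have e: "PP p z (t+1) - PP p z (t-1) = (p*p - 1) * (w*w - 1) / (2 * p * w)"
    unfolding PP_succ[symmetric] PP_pred[symmetric] w_def[symmetric] using p0 w0
    by (simp add: field_simps)
  have "norm (w * w) > 1" using less_1_mult[OF w1 w1] by (simp add: norm_mult)
  then have "w * w \<noteq> 1" by auto
  then show ?thesis unfolding e using pp1 p0 w0 by simp
qed

lemma AWD_PP: "t \<le> int n \<Longrightarrow>
   AWD q g (PP p z t) = (g (PP p z (t+1)) - g (PP p z (t-1))) / (PP p z (t+1) - PP p z (t-1))"
  unfolding AWD_def using PP_not1[of t] eta_PP[of t] etainv_PP[of t] by simp

lemma AWDpow_Suc: "AWDpow q (Suc i) g = AWD q (AWDpow q i g)"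
  unfolding AWDpow_def by simp

end



theorem proposition4p2:
  fixes q :: complex and n :: nat and f :: "nat \<Rightarrow> complex \<Rightarrow> complex"
    and x :: complex and \<delta> :: "nat \<Rightarrow> int"
  assumes "0 < norm q" and "norm q < 1"
    and "\<forall>j\<le>n. f j meromorphic_on UNIV"
    and "norm x > RR n q"
    and "\<forall>i<n. \<delta> i = 1 \<or> \<delta> i = -1"
  shows "AWW q n f x
           = det (mat (n+1) (n+1) (\<lambda>(i,j). etaIt q (if i < n then \<delta> i * int (n - i) else 0)
                                               (AWDpow q i (f j)) x))
         \<and> AWW q n f x
           = det (mat (n+1) (n+1) (\<lambda>(i,j). etaIt q (int n - 2 * int i) (f j) x)) *
             (\<Prod>i=1..n. \<Prod>j=1..i. -1 / (etaIt q (int i - 2 * int j + 2) (\<lambda>t. t) x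
                                        - etaIt q (int i - 2 * int j) (\<lambda>t. t) x))"
proof -
  interpret C: awconc q n x using assms by unfold_locales auto
  define v where "v i t j = AWDpow q i (f j) (PP C.p C.z t)" for i t j
  define c where "c t = PP C.p C.z (t+1) - PP C.p C.z (t-1)" for t
  have cnz: "c t \<noteq> 0" if "t \<le> int n" for t using C.cdiff[OF that] unfolding c_def .
  interpret A: awalg n v c
  proof
    fix i t assume i: "i < n" and t: "\<bar>t\<bar> < int n"
    have tn: "t \<le> int n" using t by simp
    have cn: "c t \<noteq> 0" using cnz[OF tn] .
    show "v i (t-1) = (\<lambda>j. 1 * v i (t+1) j + (- c t) * v (Suc i) t j)"
    proof
      fix j
      have "v (Suc i) t j = (v i (t+1) j - v i (t-1) j) / c t"
        unfolding v_def c_def C.AWDpow_Suc C.AWD_PP[OF tn] ..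
      then show "v i (t-1) j = 1 * v i (t+1) j + (- c t) * v (Suc i) t j" using cn
        by (simp add: field_simps)
    qed
  qed
  have W: "AWW q n f x = det (MR (Suc n) A.avgr)"
    unfolding AWW_def MR_def A.avgr_def
    by (intro arg_cong[where f=det] eq_matI) (auto simp: C.avg_PP v_def of_nat_diff)
  define s where "s i = (if i < n then \<delta> i * int (n - i) else 0)" for i
  have sb: "s i \<le> int n" for i using assms(5) unfolding s_def by auto
  have D1: "det (mat (n+1) (n+1) (\<lambda>(i,j). etaIt q (if i < n then \<delta> i * int (n - i) else 0)
                                               (AWDpow q i (f j)) x)) = det (MR (Suc n) (\<lambda>i. v i (s i)))"
    unfolding MR_def s_def[symmetric]
    by (intro arg_cong[where f=det] eq_matI) (auto simp: C.etaIt_PP[OF sb] v_def)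
  have adm: "\<forall>i\<le>n. A.adm i (s i)"
  proof (intro allI impI)
    fix i assume i: "i \<le> n"
    show "A.adm i (s i)"
    proof (cases "i < n")
      case True
      then have "\<delta> i = 1 \<or> \<delta> i = -1" using assms(5) by auto
      then show ?thesis
      proof
        assume "\<delta> i = 1" then show ?thesis using True unfolding A.adm_def s_def by (intro exI[of _ 0]) auto
      next
        assume "\<delta> i = -1" then show ?thesis using True unfolding A.adm_def s_def by (intro exI[of _ "n - i"]) (auto simp: of_nat_diff)
      qed
    next
      case False
      then show ?thesis unfolding A.adm_def s_def using i by auto
    qed
  qed
  have part1: "AWW q n f x = det (MR (Suc n) (\<lambda>i. v i (s i)))"
    using W A.main1 A.main2[OF adm] by simp
  have D2: "det (mat (n+1) (n+1) (\<lambda>(i,j). etaIt q (int n - 2 * int i) (f j) x))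
      = det (MR (Suc n) (\<lambda>i. v 0 (int n - 2 * int i)))"
    unfolding MR_def
    by (intro arg_cong[where f=det] eq_matI) (auto simp: C.etaIt_PP v_def AWDpow_def)
  have P: "(\<Prod>i=1..n. \<Prod>j=1..i. -1 / (etaIt q (int i - 2 * int j + 2) (\<lambda>t. t) x
                                        - etaIt q (int i - 2 * int j) (\<lambda>t. t) x))
      = (\<Prod>i=1..n. \<Prod>j=1..i. -1 / c (int i - 2 * int j + 1))"
  proof (intro prod.cong refl)
    fix i j assume i: "i \<in> {1..n}" and j: "j \<in> {1..i}"
    have "etaIt q (int i - 2 * int j + 2) (\<lambda>t. t) x = PP C.p C.z (int i - 2 * int j + 2)"
      using i j by (intro C.etaIt_PP) auto
    moreover have "etaIt q (int i - 2 * int j) (\<lambda>t. t) x = PP C.p C.z (int i - 2 * int j)"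
      using i j by (intro C.etaIt_PP) auto
    ultimately show "-1 / (etaIt q (int i - 2 * int j + 2) (\<lambda>t. t) x
                                        - etaIt q (int i - 2 * int j) (\<lambda>t. t) x) = -1 / c (int i - 2 * int j + 1)"
      unfolding c_def by (simp add: algebra_simps)
  qed
  have G: "(\<Prod>i=1..n. \<Prod>j=1..i. -1 / c (int i - 2 * int j + 1)) * A.GG 0 = 1"
  proof -
    have "(\<Prod>i=1..n. \<Prod>j=1..i. -1 / c (int i - 2 * int j + 1)) * A.GG 0
        = (\<Prod>i=1..n. \<Prod>j=1..i. (-1 / c (int i - 2 * int j + 1)) * (- c (int i - 2 * int j + 1)))"
    proof -
      have g: "A.GG 0 = (\<Prod>i=1..n. \<Prod>j=1..i. - c (int i - 2 * int j + 1))"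
        unfolding A.GG_def by simp
      show ?thesis unfolding g by (simp only: prod.distrib[symmetric])
    qed
    also have "\<dots> = (\<Prod>i=1..n. \<Prod>j=1..i. (1::complex))"
    proof (intro prod.cong refl)
      fix i j assume i: "i \<in> {1..n}" and j: "j \<in> {1..i}"
      have "c (int i - 2 * int j + 1) \<noteq> 0" using i j by (intro cnz) auto
      then show "(-1 / c (int i - 2 * int j + 1)) * (- c (int i - 2 * int j + 1)) = 1" by simp
    qed
    finally show ?thesis by simp
  qed
  have part2: "AWW q n f x = det (MR (Suc n) (\<lambda>i. v 0 (int n - 2 * int i))) *
      (\<Prod>i=1..n. \<Prod>j=1..i. -1 / c (int i - 2 * int j + 1))"
    unfolding A.main3 using W A.main1 G by (simp add: mult_ac)
  show ?thesis using part1 part2 D1 D2 P by simp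
qed

end
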